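(* For all integers $n\ge 2$ and $0\le i\le n$, $$|\mathrm{Bal}^*(n,i)|=\binom{2n-2}{n-i-1}-\binom{2n-2}{n-i-2}+\binom{n-2}{n-i}.$$ Moreover, for the same $n,i$, $$\Big|\bigsqcup_{\substack{b\ge\max(i,1),\ k\ge0\\ 2b-i+k=n}}\mathrm{SYT}^{+k}\big((b,b-i)\big)\Big|=\binom{2n-2}{n-i-1}-\binom{2n-2}{n-i-2}+\binom{n-2}{n-i},$$ where $(b,0)$ denotes the one-row shape $(b)$.
   Context: Binomial coefficients $\binom{a}{c}$ with $a\ge0$ are $0$ if $c<0$ or $c>a$. A ballotlike path of length $n$ ending at height $i$ is a lattice path from $(0,0)$ to $(n,i)$ with steps $U=(1,1)$, $D=(1,-1)$ and horizontal steps $(1,0)$ colored umber ($u$) or denim ($d$), never going below the $x$-axis, such that no umber step occurs at height $0$ and no denim step occurs before the first $D$ step. $\mathrm{Bal}^*(n,i)$ is the set of these paths. $\mathrm{SYT}^{+k}(\lambda)$: for a partition $\lambda$ of $N$ and $k\ge0$, the set of fillings of the cells of $\lambda$ by nonempty sets of positive integers forming a set partition of $[N+k]$, with $\max S(u)<\min S(v)$ whenever $u\ne v$ and $u$ is weakly northwest of $v$. *)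

theory Defs
  imports Main
begin

(* Binomial coefficient with nonnegative top a and integer bottom c:
   0 if c < 0 or c > a (the latter is built into nat choose). *)
definition ibinom :: "nat \<Rightarrow> int \<Rightarrow> int" where
  "ibinom a c = (if c < 0 then 0 else int (a choose nat c))"

(* Steps: U=(1,1), D=(1,-1), horizontal umber Hu, horizontal denim Hd *)
datatype step = U | D | Hu | Hd

fun step_val :: "step \<Rightarrow> int" where
  "step_val U = 1"
| "step_val D = -1"
| "step_val Hu = 0"
| "step_val Hd = 0"

definition ht :: "step list \<Rightarrow> int" where
  "ht p = sum_list (map step_val p)"

(* the k-th step (0-indexed) starts at height ht (take k p) *)
definition ballotlike :: "step list \<Rightarrow> bool" where
  "ballotlike p \<longleftrightarrow>
     (\<forall>k\<le>length p. 0 \<le> ht (take k p)) \<and>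
     (\<forall>k<length p. p ! k = Hu \<longrightarrow> ht (take k p) \<noteq> 0) \<and>
     (\<forall>k<length p. p ! k = Hd \<longrightarrow> D \<in> set (take k p))"

definition Bal :: "nat \<Rightarrow> nat \<Rightarrow> step list set" where
  "Bal n i = {p. length p = n \<and> ballotlike p \<and> ht p = int i}"

(* Cells of a partition given as a list of row lengths; (row, column), 0-indexed,
   English convention: "weakly northwest" = row and column both weakly smaller. *)
definition cells :: "nat list \<Rightarrow> (nat \<times> nat) set" where
  "cells lam = {(r, c). r < length lam \<and> c < lam ! r}"

definition SYTplus :: "nat \<Rightarrow> nat list \<Rightarrow> ((nat \<times> nat) \<Rightarrow> nat set) set" where
  "SYTplus k lam = {F.
     (\<forall>x. x \<notin> cells lam \<longrightarrow> F x = {}) \<and>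
     (\<forall>x\<in>cells lam. F x \<noteq> {}) \<and>
     (\<Union>x\<in>cells lam. F x) = {1..sum_list lam + k} \<and>
     (\<forall>x\<in>cells lam. \<forall>y\<in>cells lam. x \<noteq> y \<longrightarrow> F x \<inter> F y = {}) \<and>
     (\<forall>u\<in>cells lam. \<forall>v\<in>cells lam. u \<noteq> v \<and> fst u \<le> fst v \<and> snd u \<le> snd v
         \<longrightarrow> Max (F u) < Min (F v))}"

definition twoRow :: "nat \<Rightarrow> nat \<Rightarrow> nat list" where
  "twoRow b c = (if c = 0 then [b] else [b, c])"

end

theory Submission
  imports Defs
begin


lemma ht_Nil[simp]: "ht [] = 0" by (simp add: ht_def)
lemma ht_append[simp]: "ht (xs @ ys) = ht xs + ht ys" by (simp add: ht_def)
lemma ht_Cons[simp]: "ht (x # ys) = step_val x + ht ys" by (simp add: ht_def)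
lemma ht_single[simp]: "ht [x] = step_val x" by (simp add: ht_def)

lemma ballotlike_Nil[simp]: "ballotlike []" by (simp add: ballotlike_def)

lemma ballotlike_snoc:
  "ballotlike (q @ [s]) \<longleftrightarrow> ballotlike q \<and> 0 \<le> ht q + step_val s
     \<and> (s = Hu \<longrightarrow> ht q \<noteq> 0) \<and> (s = Hd \<longrightarrow> D \<in> set q)"
proof
  assume b: "ballotlike (q @ [s])"
  have A: "\<forall>k\<le>length q. 0 \<le> ht (take k q)"
  proof (intro allI impI)
    fix k assume "k \<le> length q"
    with b show "0 \<le> ht (take k q)" unfolding ballotlike_def by (auto dest!: spec[of _ k])
  qed
  have B: "\<forall>k<length q. q ! k = Hu \<longrightarrow> ht (take k q) \<noteq> 0"
  proof (intro allI impI)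
    fix k assume "k < length q" "q ! k = Hu"
    with b show "ht (take k q) \<noteq> 0" unfolding ballotlike_def
      by (auto dest!: spec[of _ k] simp: nth_append)
  qed
  have C: "\<forall>k<length q. q ! k = Hd \<longrightarrow> D \<in> set (take k q)"
  proof (intro allI impI)
    fix k assume "k < length q" "q ! k = Hd"
    with b show "D \<in> set (take k q)" unfolding ballotlike_def
      by (auto dest!: spec[of _ k] simp: nth_append)
  qed
  have "0 \<le> ht (take (Suc (length q)) (q @ [s]))" using b unfolding ballotlike_def by auto
  moreover have "s = Hu \<longrightarrow> ht (take (length q) (q @ [s])) \<noteq> 0" using b unfolding ballotlike_def
    by (auto dest!: spec[of _ "length q"])
  moreover have "s = Hd \<longrightarrow> D \<in> set (take (length q) (q @ [s]))" using b unfolding ballotlike_def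
    by (auto dest!: spec[of _ "length q"])
  ultimately show "ballotlike q \<and> 0 \<le> ht q + step_val s
     \<and> (s = Hu \<longrightarrow> ht q \<noteq> 0) \<and> (s = Hd \<longrightarrow> D \<in> set q)"
    using A B C unfolding ballotlike_def by auto
next
  assume a: "ballotlike q \<and> 0 \<le> ht q + step_val s
     \<and> (s = Hu \<longrightarrow> ht q \<noteq> 0) \<and> (s = Hd \<longrightarrow> D \<in> set q)"
  show "ballotlike (q @ [s])" unfolding ballotlike_def
  proof (intro conjI allI impI)
    fix k assume "k \<le> length (q @ [s])"
    then consider "k \<le> length q" | "k = Suc (length q)" by force
    then show "0 \<le> ht (take k (q @ [s]))"
      by cases (use a in \<open>auto simp: ballotlike_def\<close>)
  next
    fix k assume k: "k < length (q @ [s])" "(q @ [s]) ! k = Hu"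
    then consider "k < length q" | "k = length q" by force
    then show "ht (take k (q @ [s])) \<noteq> 0"
      by cases (use a k in \<open>auto simp: ballotlike_def nth_append\<close>)
  next
    fix k assume k: "k < length (q @ [s])" "(q @ [s]) ! k = Hd"
    then consider "k < length q" | "k = length q" by force
    then show "D \<in> set (take k (q @ [s]))"
      by cases (use a k in \<open>auto simp: ballotlike_def nth_append\<close>)
  qed
qed


lemma ballotlike_ht: "ballotlike q \<Longrightarrow> 0 \<le> ht q"
  unfolding ballotlike_def by (metis order_refl take_all)

lemma step_UNIV: "(UNIV :: step set) = {U, D, Hu, Hd}"
  by (auto intro: step.exhaust)

lemma finite_Bal[simp]: "finite (Bal n i)"
proof -
  have "Bal n i \<subseteq> {xs. set xs \<subseteq> {U, D, Hu, Hd} \<and> length xs = n}"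
    using step_UNIV by (auto simp: Bal_def)
  moreover have "finite {xs. set xs \<subseteq> {U, D, Hu, Hd} \<and> length xs = n}"
    by (rule finite_lists_length_eq) simp
  ultimately show ?thesis by (rule finite_subset)
qed

lemma len_Suc_snoc: "length p = Suc n \<Longrightarrow> p = butlast p @ [last p] \<and> length (butlast p) = n"
  by (metis append_butlast_last_id diff_Suc_1 length_butlast list.size(3) nat.distinct(1))

lemma Bal_Suc: "Bal (Suc n) i =
   (\<lambda>q. q@[U]) ` (if 1 \<le> i then Bal n (i-1) else {}) \<union> (\<lambda>q. q@[D]) ` Bal n (Suc i) \<union>
   (\<lambda>q. q@[Hu]) ` (if i \<noteq> 0 then Bal n i else {}) \<union> (\<lambda>q. q@[Hd]) ` {q \<in> Bal n i. D \<in> set q}"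
  (is "?L = ?R")
proof
  show "?L \<subseteq> ?R"
  proof
    fix p assume p: "p \<in> ?L"
    then have l: "length p = Suc n" by (simp add: Bal_def)
    define q where "q = butlast p"
    define s where "s = last p"
    have pq: "p = q @ [s]" "length q = n" using len_Suc_snoc[OF l] by (auto simp: q_def s_def)
    have b: "ballotlike q \<and> 0 \<le> ht q + step_val s \<and> (s = Hu \<longrightarrow> ht q \<noteq> 0) \<and> (s = Hd \<longrightarrow> D \<in> set q)"
      "ht q + step_val s = int i"
      using p pq(1) unfolding Bal_def by (auto simp: ballotlike_snoc simp del: append_butlast_last_id)
    show "p \<in> ?R"
    proof (cases s)
      case U
      have "0 \<le> ht q" using b ballotlike_ht by blast
      then have "1 \<le> i" "q \<in> Bal n (i-1)" using b pq U by (auto simp: Bal_def)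
      then show ?thesis using pq U by auto
    next
      case D
      then have "q \<in> Bal n (Suc i)" using b pq by (auto simp: Bal_def)
      then show ?thesis using pq D by auto
    next
      case Hu
      then have "i \<noteq> 0" "q \<in> Bal n i" using b pq by (auto simp: Bal_def)
      then show ?thesis using pq Hu by auto
    next
      case Hd
      then have "q \<in> {q \<in> Bal n i. D \<in> set q}" using b pq by (auto simp: Bal_def)
      then show ?thesis using pq Hd by auto
    qed
  qed
next
  show "?R \<subseteq> ?L"
    by (auto simp: Bal_def ballotlike_snoc split: if_splits)
qed

lemma inj_snoc: "inj_on (\<lambda>q. q @ [s]) A" by (auto simp: inj_on_def)

lemma card_Bal_Suc: "card (Bal (Suc n) i) =
   (if 1 \<le> i then card (Bal n (i-1)) else 0) + card (Bal n (Suc i)) +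
   (if i \<noteq> 0 then card (Bal n i) else 0) + card {q \<in> Bal n i. D \<in> set q}"
proof -
  let ?A = "(\<lambda>q. q@[U]) ` (if 1 \<le> i then Bal n (i-1) else {})"
  let ?B = "(\<lambda>q. q@[D]) ` Bal n (Suc i)"
  let ?C = "(\<lambda>q. q@[Hu]) ` (if i \<noteq> 0 then Bal n i else {})"
  let ?E = "(\<lambda>q. q@[Hd]) ` {q \<in> Bal n i. D \<in> set q}"
  have f: "finite ?A" "finite ?B" "finite ?C" "finite ?E" by auto
  have "card (Bal (Suc n) i) = card (?A \<union> ?B \<union> ?C \<union> ?E)" by (simp add: Bal_Suc)
  also have "\<dots> = card (?A \<union> ?B \<union> ?C) + card ?E"
    by (rule card_Un_disjoint) (use f in auto)
  also have "card (?A \<union> ?B \<union> ?C) = card (?A \<union> ?B) + card ?C"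
    by (rule card_Un_disjoint) (use f in auto)
  also have "card (?A \<union> ?B) = card ?A + card ?B"
    by (rule card_Un_disjoint) (use f in auto)
  finally show ?thesis by (simp add: card_image[OF inj_snoc])
qed

definition BalA where "BalA n i = {q \<in> Bal n i. D \<notin> set q}"

lemma finite_BalA[simp]: "finite (BalA n i)" by (simp add: BalA_def)

lemma card_split: "card (Bal n i) = card (BalA n i) + card {q \<in> Bal n i. D \<in> set q}"
proof -
  have "Bal n i = BalA n i \<union> {q \<in> Bal n i. D \<in> set q}" by (auto simp: BalA_def)
  moreover have "card (BalA n i \<union> {q \<in> Bal n i. D \<in> set q}) = card (BalA n i) + card {q \<in> Bal n i. D \<in> set q}"
    by (rule card_Un_disjoint) (auto simp: BalA_def)
  ultimately show ?thesis by simp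
qed

lemma BalA_Suc: "BalA (Suc n) i =
   (\<lambda>q. q@[U]) ` (if 1 \<le> i then BalA n (i-1) else {}) \<union>
   (\<lambda>q. q@[Hu]) ` (if i \<noteq> 0 then BalA n i else {})"
proof -
  have "BalA (Suc n) i = {q \<in> Bal (Suc n) i. D \<notin> set q}" by (simp add: BalA_def)
  also have "\<dots> = (\<lambda>q. q@[U]) ` (if 1 \<le> i then BalA n (i-1) else {}) \<union>
   (\<lambda>q. q@[Hu]) ` (if i \<noteq> 0 then BalA n i else {})"
    unfolding Bal_Suc BalA_def by (auto split: if_splits)
  finally show ?thesis .
qed

lemma card_BalA_Suc: "card (BalA (Suc n) i) =
   (if 1 \<le> i then card (BalA n (i-1)) else 0) + (if i \<noteq> 0 then card (BalA n i) else 0)"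
proof -
  let ?A = "(\<lambda>q. q@[U]) ` (if 1 \<le> i then BalA n (i-1) else {})"
  let ?C = "(\<lambda>q. q@[Hu]) ` (if i \<noteq> 0 then BalA n i else {})"
  have "card (BalA (Suc n) i) = card (?A \<union> ?C)" by (simp add: BalA_Suc)
  also have "\<dots> = card ?A + card ?C" by (rule card_Un_disjoint) auto
  finally show ?thesis by (simp add: card_image[OF inj_snoc])
qed

lemma Bal_0: "Bal 0 i = (if i = 0 then {[]} else {})"
  by (auto simp: Bal_def)

lemma BalA_0: "BalA 0 i = (if i = 0 then {[]} else {})"
  by (auto simp: BalA_def Bal_def)


lemma ibinom_neg[simp]: "c < 0 \<Longrightarrow> ibinom a c = 0" by (simp add: ibinom_def)

lemma ibinom_Suc: "ibinom (Suc a) c = ibinom a c + ibinom a (c - 1)"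
proof (cases "c < 0")
  case True then show ?thesis by simp
next
  case False
  show ?thesis
  proof (cases "c = 0")
    case True then show ?thesis by (simp add: ibinom_def)
  next
    case F2: False
    then have "nat c = Suc (nat (c - 1))" using False by linarith
    then show ?thesis using False F2 by (simp add: ibinom_def)
  qed
qed

lemma card_BalA: "int (card (BalA (Suc n) i)) = ibinom n (int i - 1)"
proof (induction n arbitrary: i)
  case 0
  show ?case by (cases i) (auto simp: card_BalA_Suc BalA_0 ibinom_def)
next
  case (Suc n)
  show ?case
  proof (cases i)
    case 0
    then show ?thesis by (simp add: card_BalA_Suc)
  next
    case (Suc j)
    have "int (card (BalA (Suc (Suc n)) i)) = int (card (BalA (Suc n) j)) + int (card (BalA (Suc n) i))"
      using Suc by (simp add: card_BalA_Suc)
    also have "\<dots> = ibinom n (int j - 1) + ibinom n (int i - 1)" using Suc.IH by simp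
    also have "\<dots> = ibinom (Suc n) (int i - 1)" using Suc by (simp add: ibinom_Suc)
    finally show ?thesis .
  qed
qed

lemma card_Bal_rec: "int (card (Bal (Suc n) i)) =
   (if 1 \<le> i then int (card (Bal n (i-1))) else 0) + int (card (Bal n (Suc i))) +
   (if i \<noteq> 0 then int (card (Bal n i)) else 0) + int (card (Bal n i)) - int (card (BalA n i))"
  using card_Bal_Suc[of n i] card_split[of n i] by simp

definition Fm :: "nat \<Rightarrow> nat \<Rightarrow> int" where
  "Fm n i = ibinom (2*n-2) (int n - int i - 1) - ibinom (2*n-2) (int n - int i - 2) + ibinom (n-2) (int i - 2)"

lemma Bal_2: "int (card (Bal 2 i)) = Fm 2 i"
proof -
  have B1: "int (card (Bal 1 j)) = (if j = 1 then 1 else 0)" for j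
    using card_Bal_rec[of 0 j] by (auto simp: Bal_0 BalA_0)
  have A1: "int (card (BalA 1 j)) = (if j = 1 then 1 else 0)" for j
    using card_BalA[of 0 j] by (auto simp: ibinom_def)
  have "int (card (Bal 2 i)) = (if i \<le> 2 then 1 else 0)"
    using card_Bal_rec[of 1 i] B1 A1 by (auto simp: numeral_2_eq_2)
  also have "\<dots> = Fm 2 i"
    by (cases "i = 0"; cases "i = 1"; cases "i = 2") (auto simp: Fm_def ibinom_def nat_diff_distrib)
  finally show ?thesis .
qed


lemma ibinom_Suc2: "ibinom (Suc (Suc a)) c = ibinom a c + 2 * ibinom a (c - 1) + ibinom a (c - 2)"
  by (simp add: ibinom_Suc algebra_simps)

lemma Fm_rec:
  assumes "n \<ge> 2"
  shows "Fm (Suc n) i = (if 1 \<le> i then Fm n (i-1) else 0) + Fm n (Suc i) +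
     (if i \<noteq> 0 then Fm n i else 0) + Fm n i - ibinom (n-1) (int i - 1)"
proof -
  obtain m where n: "n = Suc (Suc m)" using assms by (metis add_2_eq_Suc le_iff_add)
  define x where "x = int n - int i"
  define b where "b y = ibinom (2*m+2) y" for y
  define d where "d y = ibinom m y" for y
  have L: "Fm (Suc n) i = b x + b (x-1) - b (x-2) - b (x-3) + d (int i - 2) + d (int i - 3)"
  proof -
    have e1: "2 * Suc n - 2 = Suc (Suc (2*m+2))" using n by simp
    have e2: "Suc n - 2 = Suc m" using n by simp
    have "Fm (Suc n) i = ibinom (Suc (Suc (2*m+2))) x - ibinom (Suc (Suc (2*m+2))) (x - 1)
          + ibinom (Suc m) (int i - 2)"
      unfolding Fm_def e1 e2 x_def by (simp add: algebra_simps)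
    also have "\<dots> = b x + b (x-1) - b (x-2) - b (x-3) + d (int i - 2) + d (int i - 3)"
      unfolding ibinom_Suc2 ibinom_Suc b_def d_def by (simp add: algebra_simps)
    finally show ?thesis .
  qed
  have e3: "2 * n - 2 = 2*m+2" "n - 2 = m" using n by auto
  have F: "Fm n j = b (int n - int j - 1) - b (int n - int j - 2) + d (int j - 2)" for j
    unfolding Fm_def e3 b_def d_def ..
  have A: "ibinom (n-1) (int i - 1) = d (int i - 1) + d (int i - 2)"
    using n by (simp add: ibinom_Suc d_def)
  show ?thesis
  proof (cases "i = 0")
    case True
    have "b x = b (x - 2)"
    proof -
      have "x = int m + 2" using True n x_def by simp
      then have "b x = int ((2*m+2) choose (m+2))" "b (x-2) = int ((2*m+2) choose m)"
        by (simp_all add: b_def ibinom_def nat_add_distrib)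
      moreover have "(2*m+2) choose (m+2) = (2*m+2) choose m"
        using binomial_symmetric[of m "2*m+2"] by simp
      ultimately show ?thesis by simp
    qed
    moreover have "d (-1) = 0" "d (-2) = 0" "d (-3) = 0" by (simp_all add: d_def)
    ultimately show ?thesis using True L F[of 0] F[of 1] A unfolding x_def by (simp add: algebra_simps)
  next
    case False
    have "int (i - 1) = int i - 1" using False by simp
    then show ?thesis using False L F[of "i-1"] F[of "Suc i"] F[of i] A unfolding x_def
      by (simp add: algebra_simps)
  qed
qed

lemma Bal_formula: "n \<ge> 2 \<Longrightarrow> int (card (Bal n i)) = Fm n i"
proof (induction n arbitrary: i rule: dec_induct)
  case base
  then show ?case by (rule Bal_2)
next
  case (step n)
  have A: "int (card (BalA n i)) = ibinom (n-1) (int i - 1)"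
    using card_BalA[of "n-1" i] step(1) by simp
  show ?case using card_Bal_rec[of n i] step(3) A Fm_rec[OF step(1), of i] by simp
qed




definition nU :: "step list \<Rightarrow> nat" where "nU xs = length (filter (\<lambda>s. s = U) xs)"
definition nD :: "step list \<Rightarrow> nat" where "nD xs = length (filter (\<lambda>s. s = D) xs)"

lemma nU_simps[simp]: "nU [] = 0" "nU (xs @ ys) = nU xs + nU ys" "nU (x # xs) = (if x = U then 1 else 0) + nU xs"
  by (simp_all add: nU_def)
lemma nD_simps[simp]: "nD [] = 0" "nD (xs @ ys) = nD xs + nD ys" "nD (x # xs) = (if x = D then 1 else 0) + nD xs"
  by (simp_all add: nD_def)

lemma ht_nUD: "ht xs = int (nU xs) - int (nD xs)"
proof (induction xs)
  case Nil then show ?case by simp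
next
  case (Cons x xs) then show ?case by (cases x) auto
qed

lemma nUD_len: "nU xs + nD xs \<le> length xs"
proof (induction xs)
  case Nil then show ?case by simp
next
  case (Cons x xs) then show ?case by (cases x) auto
qed

lemma D_in_iff: "D \<in> set xs \<longleftrightarrow> 0 < nD xs"
  by (induction xs) auto

lemma nU_take_le: "a \<le> b \<Longrightarrow> nU (take a xs) \<le> nU (take b xs)"
proof -
  assume "a \<le> b"
  then have "take a xs = take a (take b xs)" by (simp add: min_def)
  then have "nU (take b xs) = nU (take a xs) + nU (drop a (take b xs))"
    by (metis append_take_drop_id nU_simps(2))
  then show ?thesis by simp
qed

lemma nD_take_le: "a \<le> b \<Longrightarrow> nD (take a xs) \<le> nD (take b xs)"
proof -
  assume "a \<le> b"
  then have "take a xs = take a (take b xs)" by (simp add: min_def)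
  then have "nD (take b xs) = nD (take a xs) + nD (drop a (take b xs))"
    by (metis append_take_drop_id nD_simps(2))
  then show ?thesis by simp
qed

lemma nU_take_Suc: "j < length xs \<Longrightarrow> nU (take (Suc j) xs) = nU (take j xs) + (if xs ! j = U then 1 else 0)"
  by (simp add: take_Suc_conv_app_nth)
lemma nD_take_Suc: "j < length xs \<Longrightarrow> nD (take (Suc j) xs) = nD (take j xs) + (if xs ! j = D then 1 else 0)"
  by (simp add: take_Suc_conv_app_nth)

lemma bl_nonneg: "ballotlike p \<Longrightarrow> k \<le> length p \<Longrightarrow> nD (take k p) \<le> nU (take k p)"
  unfolding ballotlike_def ht_nUD by auto

lemma bl_Hu: "ballotlike p \<Longrightarrow> j < length p \<Longrightarrow> p ! j = Hu \<Longrightarrow> nD (take j p) < nU (take j p)"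
proof -
  assume a: "ballotlike p" "j < length p" "p ! j = Hu"
  then have "ht (take j p) \<noteq> 0" "0 \<le> ht (take j p)" unfolding ballotlike_def by auto
  then show ?thesis unfolding ht_nUD by linarith
qed

lemma bl_Hd: "ballotlike p \<Longrightarrow> j < length p \<Longrightarrow> p ! j = Hd \<Longrightarrow> 0 < nD (take j p)"
  unfolding ballotlike_def D_in_iff by auto

lemma bl_first: "ballotlike p \<Longrightarrow> 0 < length p \<Longrightarrow> p ! 0 = U"
proof -
  assume a: "ballotlike p" "0 < length p"
  then have h: "0 \<le> ht (take 1 p)" unfolding ballotlike_def by (metis One_nat_def Suc_leI)
  have t: "take 1 p = [p ! 0]" using a(2) by (simp add: take_Suc_conv_app_nth)
  have "p ! 0 \<noteq> Hu" using a unfolding ballotlike_def by force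
  moreover have "p ! 0 \<noteq> Hd" using a unfolding ballotlike_def by force
  moreover have "p ! 0 \<noteq> D" using h t by auto
  ultimately show ?thesis by (cases "p ! 0") auto
qed

definition lab :: "step list \<Rightarrow> nat \<Rightarrow> nat \<times> nat" where
  "lab p j = (if p ! j = U \<or> p ! j = Hu then (0, nU (take (Suc j) p) - 1) else (1, nD (take (Suc j) p) - 1))"

definition FF :: "step list \<Rightarrow> nat \<times> nat \<Rightarrow> nat set" where
  "FF p x = {Suc j | j. j < length p \<and> lab p j = x}"

lemma lab0: "ballotlike p \<Longrightarrow> j < length p \<Longrightarrow> p ! j = U \<or> p ! j = Hu \<Longrightarrow>
   fst (lab p j) = 0 \<and> nU (take (Suc j) p) = Suc (snd (lab p j))"
proof -
  assume a: "ballotlike p" "j < length p" "p ! j = U \<or> p ! j = Hu"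
  have "nU (take (Suc j) p) \<ge> 1"
    using a nU_take_Suc[OF a(2)] bl_Hu[OF a(1,2)] by auto
  then show ?thesis using a(3) by (auto simp: lab_def)
qed

lemma lab1: "ballotlike p \<Longrightarrow> j < length p \<Longrightarrow> \<not> (p ! j = U \<or> p ! j = Hu) \<Longrightarrow>
   fst (lab p j) = 1 \<and> nD (take (Suc j) p) = Suc (snd (lab p j))"
proof -
  assume a: "ballotlike p" "j < length p" "\<not> (p ! j = U \<or> p ! j = Hu)"
  then have "p ! j = D \<or> p ! j = Hd" by (cases "p ! j") auto
  then have "nD (take (Suc j) p) \<ge> 1"
    using a nD_take_Suc[OF a(2)] bl_Hd[OF a(1,2)] by auto
  then show ?thesis using a(3) by (auto simp: lab_def)
qed

lemma lab_fst: "fst (lab p j) = 0 \<longleftrightarrow> p ! j = U \<or> p ! j = Hu"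
  by (simp add: lab_def)


lemma cells_twoRow: "cells (twoRow b c) = {(r, y). (r = 0 \<and> y < b) \<or> (r = 1 \<and> y < c)}"
  unfolding cells_def twoRow_def by (auto simp: less_2_cases_iff nth_Cons split: nat.splits)

lemma sum_twoRow[simp]: "sum_list (twoRow b c) = b + c"
  by (simp add: twoRow_def)

lemma lab_cells: "ballotlike p \<Longrightarrow> j < length p \<Longrightarrow> lab p j \<in> cells (twoRow (nU p) (nD p))"
proof -
  assume a: "ballotlike p" "j < length p"
  have "nU (take (Suc j) p) \<le> nU p" "nD (take (Suc j) p) \<le> nD p"
    using nU_take_le[of "Suc j" "length p" p] nD_take_le[of "Suc j" "length p" p] a(2) by auto
  then show ?thesis unfolding cells_twoRow using lab0[OF a] lab1[OF a]
    by (cases "p ! j = U \<or> p ! j = Hu") (auto simp: prod_eq_iff split: prod.splits)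
qed

lemma exU: "y < nU xs \<Longrightarrow> \<exists>j<length xs. xs ! j = U \<and> nU (take j xs) = y"
proof (induction xs arbitrary: y)
  case Nil then show ?case by simp
next
  case (Cons x xs)
  show ?case
  proof (cases "x = U")
    case True
    show ?thesis
    proof (cases y)
      case 0 then show ?thesis using True by auto
    next
      case (Suc y')
      then have "y' < nU xs" using Cons.prems True by simp
      then obtain j where "j < length xs" "xs ! j = U" "nU (take j xs) = y'" using Cons.IH by blast
      then show ?thesis using Suc True by (intro exI[of _ "Suc j"]) auto
    qed
  next
    case False
    then have "y < nU xs" using Cons.prems by simp
    then obtain j where "j < length xs" "xs ! j = U" "nU (take j xs) = y" using Cons.IH by blast
    then show ?thesis using False by (intro exI[of _ "Suc j"]) auto
  qed
qed

lemma exD: "y < nD xs \<Longrightarrow> \<exists>j<length xs. xs ! j = D \<and> nD (take j xs) = y"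
proof (induction xs arbitrary: y)
  case Nil then show ?case by simp
next
  case (Cons x xs)
  show ?case
  proof (cases "x = D")
    case True
    show ?thesis
    proof (cases y)
      case 0 then show ?thesis using True by auto
    next
      case (Suc y')
      then have "y' < nD xs" using Cons.prems True by simp
      then obtain j where "j < length xs" "xs ! j = D" "nD (take j xs) = y'" using Cons.IH by blast
      then show ?thesis using Suc True by (intro exI[of _ "Suc j"]) auto
    qed
  next
    case False
    then have "y < nD xs" using Cons.prems by simp
    then obtain j where "j < length xs" "xs ! j = D" "nD (take j xs) = y" using Cons.IH by blast
    then show ?thesis using False by (intro exI[of _ "Suc j"]) auto
  qed
qed

lemma lab_order:
  assumes bl: "ballotlike p" and j: "j < length p" and j': "j' < length p"
    and ne: "lab p j \<noteq> lab p j'" and le1: "fst (lab p j) \<le> fst (lab p j')"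
    and le2: "snd (lab p j) \<le> snd (lab p j')"
  shows "j < j'"
proof (rule ccontr)
  assume "\<not> j < j'"
  with ne have lt: "j' < j" by (metis linorder_neqE_nat)
  have sj: "Suc j' \<le> Suc j" using lt by simp
  show False
  proof (cases "p ! j = U \<or> p ! j = Hu")
    case r0: True
    note L = lab0[OF bl j r0]
    show False
    proof (cases "p ! j' = U \<or> p ! j' = Hu")
      case True
      note L' = lab0[OF bl j' True]
      have "nU (take (Suc j') p) \<le> nU (take (Suc j) p)" by (rule nU_take_le[OF sj])
      then have "snd (lab p j') \<le> snd (lab p j)" using L L' by simp
      then show False using le2 ne L L' by (simp add: prod_eq_iff)
    next
      case False
      note L' = lab1[OF bl j' False]
      have h1: "nD (take (Suc j') p) \<le> nU (take (Suc j') p)" using bl_nonneg[OF bl, of "Suc j'"] j' by simp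
      have h2: "nU (take (Suc j') p) \<le> nU (take j p)" by (rule nU_take_le) (use lt in simp)
      have h3: "nU (take j p) \<le> nU (take (Suc j) p)" by (rule nU_take_le) simp
      have eqs: "nU (take j p) = nU (take (Suc j) p)" using h1 h2 h3 L L' le2 by simp
      then have "p ! j \<noteq> U" using nU_take_Suc[OF j] by auto
      then have Hu: "p ! j = Hu" using r0 by simp
      have h4: "nD (take (Suc j') p) \<le> nD (take j p)" by (rule nD_take_le) (use lt in simp)
      have "nD (take j p) < nU (take j p)" by (rule bl_Hu[OF bl j Hu])
      then show False using h1 h2 h3 h4 L L' le2 eqs by simp
    qed
  next
    case r1: False
    note L = lab1[OF bl j r1]
    show False
    proof (cases "p ! j' = U \<or> p ! j' = Hu")
      case True
      note L' = lab0[OF bl j' True]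
      then show False using le1 L by simp
    next
      case False
      note L' = lab1[OF bl j' False]
      have "nD (take (Suc j') p) \<le> nD (take (Suc j) p)" by (rule nD_take_le[OF sj])
      then have "snd (lab p j') \<le> snd (lab p j)" using L L' by simp
      then show False using le2 ne L L' by (simp add: prod_eq_iff)
    qed
  qed
qed


lemma FF_fin: "finite (FF p x)"
proof -
  have "FF p x \<subseteq> Suc ` {..<length p}" by (auto simp: FF_def)
  then show ?thesis by (rule finite_subset) simp
qed

lemma FF_ne: assumes bl: "ballotlike p" and x: "x \<in> cells (twoRow (nU p) (nD p))"
  shows "FF p x \<noteq> {}"
proof -
  from x consider y where "x = (0, y)" "y < nU p" | y where "x = (1, y)" "y < nD p"
    unfolding cells_twoRow by auto
  then show ?thesis
  proof cases
    case 1
    obtain j where j: "j < length p" "p ! j = U" "nU (take j p) = y" using exU[OF 1(2)] by blast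
    have "lab p j = x" using lab0[OF bl j(1)] j nU_take_Suc[OF j(1)] 1(1) by (simp add: prod_eq_iff)
    then have "Suc j \<in> FF p x" using j(1) by (auto simp: FF_def)
    then show ?thesis by blast
  next
    case 2
    obtain j where j: "j < length p" "p ! j = D" "nD (take j p) = y" using exD[OF 2(2)] by blast
    have "lab p j = x" using lab1[OF bl j(1)] j nD_take_Suc[OF j(1)] 2(1) by (simp add: prod_eq_iff)
    then have "Suc j \<in> FF p x" using j(1) by (auto simp: FF_def)
    then show ?thesis by blast
  qed
qed

lemma FF_SYT: assumes bl: "ballotlike p"
  shows "FF p \<in> SYTplus (length p - nU p - nD p) (twoRow (nU p) (nD p))"
  unfolding SYTplus_def mem_Collect_eq
proof (intro conjI ballI allI impI)
  fix x assume "x \<notin> cells (twoRow (nU p) (nD p))"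
  then show "FF p x = {}" using lab_cells[OF bl] by (auto simp: FF_def)
next
  fix x assume "x \<in> cells (twoRow (nU p) (nD p))"
  then show "FF p x \<noteq> {}" by (rule FF_ne[OF bl])
next
  have len: "sum_list (twoRow (nU p) (nD p)) + (length p - nU p - nD p) = length p"
    using nUD_len[of p] by simp
  show "(\<Union>x\<in>cells (twoRow (nU p) (nD p)). FF p x) = {1..sum_list (twoRow (nU p) (nD p)) + (length p - nU p - nD p)}"
    unfolding len
  proof
    show "(\<Union>x\<in>cells (twoRow (nU p) (nD p)). FF p x) \<subseteq> {1..length p}" by (auto simp: FF_def)
  next
    show "{1..length p} \<subseteq> (\<Union>x\<in>cells (twoRow (nU p) (nD p)). FF p x)"
    proof
      fix m assume m: "m \<in> {1..length p}"
      then have "m - 1 < length p" "m = Suc (m - 1)" by auto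
      then have "m \<in> FF p (lab p (m - 1))" unfolding FF_def by blast
      then show "m \<in> (\<Union>x\<in>cells (twoRow (nU p) (nD p)). FF p x)"
        using lab_cells[OF bl \<open>m - 1 < length p\<close>] by blast
    qed
  qed
next
  fix x y :: "nat \<times> nat" assume "x \<noteq> y"
  then show "FF p x \<inter> FF p y = {}" by (auto simp: FF_def)
next
  fix u v assume u: "u \<in> cells (twoRow (nU p) (nD p))" and v: "v \<in> cells (twoRow (nU p) (nD p))"
    and c: "u \<noteq> v \<and> fst u \<le> fst v \<and> snd u \<le> snd v"
  have "Max (FF p u) \<in> FF p u" by (rule Max_in[OF FF_fin FF_ne[OF bl u]])
  then obtain j where j: "Max (FF p u) = Suc j" "j < length p" "lab p j = u" by (auto simp: FF_def)
  have "Min (FF p v) \<in> FF p v" by (rule Min_in[OF FF_fin FF_ne[OF bl v]])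
  then obtain j' where j': "Min (FF p v) = Suc j'" "j' < length p" "lab p j' = v" by (auto simp: FF_def)
  have "j < j'" using lab_order[OF bl j(2) j'(2)] j j' c by simp
  then show "Max (FF p u) < Min (FF p v)" using j j' by simp
qed

lemma FF_inj: assumes bp: "ballotlike p" and bq: "ballotlike q" and len: "length p = length q"
  and eq: "FF p = FF q" shows "p = q"
proof -
  have labeq: "lab p j = lab q j" if j: "j < length p" for j
  proof -
    have "Suc j \<in> FF p (lab p j)" using j by (auto simp: FF_def)
    then have "Suc j \<in> FF q (lab p j)" using eq by simp
    then show ?thesis by (auto simp: FF_def)
  qed
  have "t \<le> length p \<Longrightarrow> take t p = take t q" for t
  proof (induction t)
    case 0 then show ?case by simp
  next
    case (Suc t)
    then have t: "t < length p" "t < length q" using len by auto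
    have IH: "take t p = take t q" using Suc by simp
    have "p ! t = q ! t"
    proof (cases "p ! t = U \<or> p ! t = Hu")
      case True
      note L = lab0[OF bp t(1) True]
      then have "fst (lab q t) = 0" using labeq[OF t(1)] by simp
      then have Q: "q ! t = U \<or> q ! t = Hu" by (simp add: lab_fst)
      note L' = lab0[OF bq t(2) Q]
      have "nU (take (Suc t) p) = nU (take (Suc t) q)" using L L' labeq[OF t(1)] by simp
      then have "(p ! t = U) = (q ! t = U)" using nU_take_Suc[OF t(1)] nU_take_Suc[OF t(2)] IH
        by (auto split: if_splits)
      then show ?thesis using True Q by auto
    next
      case False
      note L = lab1[OF bp t(1) False]
      then have "fst (lab q t) \<noteq> 0" using labeq[OF t(1)] by simp
      then have Q: "\<not> (q ! t = U \<or> q ! t = Hu)" by (simp add: lab_fst)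
      note L' = lab1[OF bq t(2) Q]
      have "nD (take (Suc t) p) = nD (take (Suc t) q)" using L L' labeq[OF t(1)] by simp
      then have "(p ! t = D) = (q ! t = D)" using nD_take_Suc[OF t(1)] nD_take_Suc[OF t(2)] IH
        by (auto split: if_splits)
      then show ?thesis using False Q by (cases "p ! t"; cases "q ! t") auto
    qed
    then show ?case using IH t by (simp add: take_Suc_conv_app_nth)
  qed
  then show ?thesis using len by (metis order_refl take_all)
qed




locale sytl =
  fixes F :: "nat \<times> nat \<Rightarrow> nat set" and k b c :: nat
  assumes FS: "F \<in> SYTplus k (twoRow b c)" and cb: "c \<le> b"
begin

definition N where "N = b + c + k"

lemma C0: "(0, y) \<in> cells (twoRow b c) \<longleftrightarrow> y < b" by (simp add: cells_twoRow)
lemma C1: "(Suc 0, y) \<in> cells (twoRow b c) \<longleftrightarrow> y < c" by (simp add: cells_twoRow)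
lemma Cfst: "x \<in> cells (twoRow b c) \<Longrightarrow> fst x = 0 \<or> fst x = 1" by (auto simp: cells_twoRow)

lemma F_out: "x \<notin> cells (twoRow b c) \<Longrightarrow> F x = {}"
proof -
  have "\<forall>x. x \<notin> cells (twoRow b c) \<longrightarrow> F x = {}" using FS unfolding SYTplus_def by blast
  then show "x \<notin> cells (twoRow b c) \<Longrightarrow> F x = {}" by blast
qed
lemma F_ne: "x \<in> cells (twoRow b c) \<Longrightarrow> F x \<noteq> {}" using FS by (simp add: SYTplus_def)
lemma F_union: "(\<Union>x\<in>cells (twoRow b c). F x) = {1..N}" using FS by (simp add: SYTplus_def N_def)
lemma F_sub: "F x \<subseteq> {1..N}"
  using F_union F_out by (cases "x \<in> cells (twoRow b c)") auto
lemma F_fin: "finite (F x)" using F_sub by (rule finite_subset) simp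
lemma F_disj: "x \<noteq> y \<Longrightarrow> F x \<inter> F y = {}"
  using FS F_out unfolding SYTplus_def
  by (cases "x \<in> cells (twoRow b c)"; cases "y \<in> cells (twoRow b c)") auto
lemma F_cover: "m \<in> {1..N} \<Longrightarrow> \<exists>x. m \<in> F x" using F_union by blast
lemma F_ord: "x \<noteq> y \<Longrightarrow> fst x \<le> fst y \<Longrightarrow> snd x \<le> snd y \<Longrightarrow> a \<in> F x \<Longrightarrow> a' \<in> F y \<Longrightarrow> a < a'"
proof -
  assume a: "x \<noteq> y" "fst x \<le> fst y" "snd x \<le> snd y" "a \<in> F x" "a' \<in> F y"
  then have xc: "x \<in> cells (twoRow b c)" "y \<in> cells (twoRow b c)" using F_out by (metis empty_iff)+
  then have "Max (F x) < Min (F y)" using FS a unfolding SYTplus_def by auto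
  moreover have "a \<le> Max (F x)" using a(4) F_fin by simp
  moreover have "Min (F y) \<le> a'" using a(5) F_fin by simp
  ultimately show ?thesis by linarith
qed

definition cellOf where "cellOf m = (THE x. m \<in> F x)"

lemma cellOf_eq: "m \<in> F x \<Longrightarrow> cellOf m = x"
  unfolding cellOf_def by (rule the_equality) (use F_disj in blast)+

lemma cellOf_in: "m \<in> {1..N} \<Longrightarrow> m \<in> F (cellOf m)"
  using F_cover cellOf_eq by metis

lemma cellOf_C: "m \<in> {1..N} \<Longrightarrow> cellOf m \<in> cells (twoRow b c)"
  using cellOf_in F_out by blast

definition mn where "mn x = Min (F x)"

lemma mn_in: "x \<in> cells (twoRow b c) \<Longrightarrow> mn x \<in> F x"
  unfolding mn_def using F_fin F_ne by simp
lemma mn_le: "a \<in> F x \<Longrightarrow> mn x \<le> a"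
  unfolding mn_def using F_fin by simp
lemma mn_range: "x \<in> cells (twoRow b c) \<Longrightarrow> 1 \<le> mn x \<and> mn x \<le> N"
  using mn_in F_sub by fastforce

definition stp where "stp m = (if fst (cellOf m) = 0 then (if m = mn (cellOf m) then U else Hu)
                               else (if m = mn (cellOf m) then D else Hd))"

definition psi where "psi = map (\<lambda>j. stp (Suc j)) [0..<N]"

lemma psi_len[simp]: "length psi = N" by (simp add: psi_def)
lemma psi_nth: "j < N \<Longrightarrow> psi ! j = stp (Suc j)" by (simp add: psi_def)

definition u where "u t = card {y. y < b \<and> mn (0, y) \<le> t}"
definition v where "v t = card {y. y < c \<and> mn (1, y) \<le> t}"

lemma stpU: "m \<in> {1..N} \<Longrightarrow> stp m = U \<longleftrightarrow> (\<exists>y. cellOf m = (0, y) \<and> m = mn (0, y))"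
  by (cases "cellOf m") (auto simp: stp_def)
lemma stpD: "m \<in> {1..N} \<Longrightarrow> stp m = D \<longleftrightarrow> (\<exists>y. cellOf m = (1, y) \<and> m = mn (1, y))"
  using Cfst[OF cellOf_C, of m] by (cases "cellOf m") (auto simp: stp_def)

lemma nU_psi: "t \<le> N \<Longrightarrow> nU (take t psi) = u t"
proof (induction t)
  case 0
  have "{y. y < b \<and> mn (0, y) \<le> 0} = {}" using mn_range C0 by fastforce
  then show ?case by (simp add: u_def)
next
  case (Suc t)
  then have t: "t < N" by simp
  have IH: "nU (take t psi) = u t" using Suc by simp
  have st: "nU (take (Suc t) psi) = u t + (if stp (Suc t) = U then 1 else 0)"
    using nU_take_Suc[of t psi] t IH psi_nth by simp
  have m: "Suc t \<in> {1..N}" using t by simp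
  let ?S = "\<lambda>t. {y. y < b \<and> mn (0, y) \<le> t}"
  have fin: "finite (?S t)" by simp
  show ?case
  proof (cases "stp (Suc t) = U")
    case True
    then obtain col where col: "cellOf (Suc t) = (0, col)" "Suc t = mn (0, col)" using stpU[OF m] by blast
    have colb: "col < b" using cellOf_C[OF m] col C0 by simp
    have "?S (Suc t) = insert col (?S t)"
    proof (rule set_eqI, rule iffI)
      fix y assume y: "y \<in> ?S (Suc t)"
      show "y \<in> insert col (?S t)"
      proof (cases "mn (0, y) = Suc t")
        case True
        then have "Suc t \<in> F (0, y)" using mn_in C0 y by fastforce
        then have "y = col" using cellOf_eq col by simp
        then show ?thesis by simp
      qed (use y in auto)
    qed (use col colb in auto)
    moreover have "col \<notin> ?S t" using col by simp
    ultimately have "u (Suc t) = Suc (u t)" using fin by (simp add: u_def)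
    then show ?thesis using st True by simp
  next
    case False
    have "?S (Suc t) = ?S t"
    proof (rule set_eqI, rule iffI)
      fix y assume y: "y \<in> ?S (Suc t)"
      show "y \<in> ?S t"
      proof (cases "mn (0, y) = Suc t")
        case True
        then have "Suc t \<in> F (0, y)" using mn_in C0 y by fastforce
        then have "cellOf (Suc t) = (0, y)" using cellOf_eq by simp
        then have "stp (Suc t) = U" using True stpU[OF m] by auto
        then show ?thesis using False by simp
      qed (use y in auto)
    qed auto
    then show ?thesis using st False by (simp add: u_def)
  qed
qed

lemma nD_psi: "t \<le> N \<Longrightarrow> nD (take t psi) = v t"
proof (induction t)
  case 0
  have "{y. y < c \<and> mn (1, y) \<le> 0} = {}" using mn_range C1 by fastforce
  then show ?case by (simp add: v_def)
next
  case (Suc t)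
  then have t: "t < N" by simp
  have IH: "nD (take t psi) = v t" using Suc by simp
  have st: "nD (take (Suc t) psi) = v t + (if stp (Suc t) = D then 1 else 0)"
    using nD_take_Suc[of t psi] t IH psi_nth by simp
  have m: "Suc t \<in> {1..N}" using t by simp
  let ?S = "\<lambda>t. {y. y < c \<and> mn (1, y) \<le> t}"
  have fin: "finite (?S t)" by simp
  show ?case
  proof (cases "stp (Suc t) = D")
    case True
    then obtain col where col: "cellOf (Suc t) = (1, col)" "Suc t = mn (1, col)" using stpD[OF m] by blast
    have colb: "col < c" using cellOf_C[OF m] col C1 by simp
    have "?S (Suc t) = insert col (?S t)"
    proof (rule set_eqI, rule iffI)
      fix y assume y: "y \<in> ?S (Suc t)"
      show "y \<in> insert col (?S t)"
      proof (cases "mn (1, y) = Suc t")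
        case True
        then have "Suc t \<in> F (1, y)" using mn_in C1 y by fastforce
        then have "y = col" using cellOf_eq col by simp
        then show ?thesis by simp
      qed (use y in auto)
    qed (use col colb in auto)
    moreover have "col \<notin> ?S t" using col by simp
    ultimately have "v (Suc t) = Suc (v t)" using fin by (simp add: v_def)
    then show ?thesis using st True by simp
  next
    case False
    have "?S (Suc t) = ?S t"
    proof (rule set_eqI, rule iffI)
      fix y assume y: "y \<in> ?S (Suc t)"
      show "y \<in> ?S t"
      proof (cases "mn (1, y) = Suc t")
        case True
        then have "Suc t \<in> F (1, y)" using mn_in C1 y by fastforce
        then have "cellOf (Suc t) = (1, y)" using cellOf_eq by simp
        then have "stp (Suc t) = D" using True stpD[OF m] by auto
        then show ?thesis using False by simp
      qed (use y in auto)
    qed auto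
    then show ?thesis using st False by (simp add: v_def)
  qed
qed


lemma u_at: assumes m: "m \<in> {1..N}" and col: "cellOf m = (0, col)"
  shows "u (m - 1) = (if m = mn (0, col) then col else Suc col)"
proof -
  have colb: "col < b" using cellOf_C[OF m] col C0 by simp
  have mF: "m \<in> F (0, col)" using cellOf_in[OF m] col by simp
  have "{y. y < b \<and> mn (0, y) \<le> m - 1} = (if m = mn (0, col) then {..<col} else {..col})"
  proof (rule set_eqI)
    fix y
    show "y \<in> {y. y < b \<and> mn (0, y) \<le> m - 1} \<longleftrightarrow> y \<in> (if m = mn (0, col) then {..<col} else {..col})"
    proof (cases y col rule: linorder_cases)
      case less
      then have "mn (0, y) < m" using F_ord[of "(0,y)" "(0,col)" "mn (0,y)" m] mn_in[of "(0,y)"] C0 colb mF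
        by simp
      then show ?thesis using less colb by auto
    next
      case equal
      have "mn (0, col) \<le> m" using mn_le[OF mF] .
      then show ?thesis using equal colb m by auto
    next
      case greater
      show ?thesis
      proof (cases "y < b")
        case True
        then have "m < mn (0, y)" using F_ord[of "(0,col)" "(0,y)" m "mn (0,y)"] mn_in[of "(0,y)"] C0 greater mF
          by simp
        then show ?thesis using greater by auto
      qed (use greater in auto)
    qed
  qed
  then show ?thesis by (simp add: u_def)
qed

lemma v_at: assumes m: "m \<in> {1..N}" and col: "cellOf m = (1, col)"
  shows "v (m - 1) = (if m = mn (1, col) then col else Suc col)"
proof -
  have colb: "col < c" using cellOf_C[OF m] col C1 by simp
  have mF: "m \<in> F (1, col)" using cellOf_in[OF m] col by simp
  have "{y. y < c \<and> mn (1, y) \<le> m - 1} = (if m = mn (1, col) then {..<col} else {..col})"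
  proof (rule set_eqI)
    fix y
    show "y \<in> {y. y < c \<and> mn (1, y) \<le> m - 1} \<longleftrightarrow> y \<in> (if m = mn (1, col) then {..<col} else {..col})"
    proof (cases y col rule: linorder_cases)
      case less
      then have "mn (1, y) < m" using F_ord[of "(1,y)" "(1,col)" "mn (1,y)" m] mn_in[of "(1,y)"] C1 colb mF
        by simp
      then show ?thesis using less colb by auto
    next
      case equal
      have "mn (1, col) \<le> m" using mn_le[OF mF] .
      then show ?thesis using equal colb m by auto
    next
      case greater
      show ?thesis
      proof (cases "y < c")
        case True
        then have "m < mn (1, y)" using F_ord[of "(1,col)" "(1,y)" m "mn (1,y)"] mn_in[of "(1,y)"] C1 greater mF
          by simp
        then show ?thesis using greater by auto
      qed (use greater in auto)
    qed
  qed
  then show ?thesis by (simp add: v_def)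
qed

lemma lab_psi: assumes j: "j < N" shows "lab psi j = cellOf (Suc j)"
proof -
  have m: "Suc j \<in> {1..N}" using j by simp
  have pj: "psi ! j = stp (Suc j)" using psi_nth[OF j] .
  obtain r col where rc: "cellOf (Suc j) = (r, col)" by fastforce
  have "r = 0 \<or> r = 1" using Cfst[OF cellOf_C[OF m]] rc by simp
  then show ?thesis
  proof
    assume r: "r = 0"
    then have st: "psi ! j = U \<or> psi ! j = Hu" using pj rc by (simp add: stp_def)
    have "nU (take (Suc j) psi) = u j + (if psi ! j = U then 1 else 0)"
      using nU_take_Suc[of j psi] nU_psi[of j] j by simp
    also have "\<dots> = Suc col" using u_at[OF m] rc r pj by (auto simp: stp_def)
    finally show ?thesis using st r rc by (simp add: lab_def)
  next
    assume r: "r = 1"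
    then have st: "\<not> (psi ! j = U \<or> psi ! j = Hu)" using pj rc by (simp add: stp_def)
    have "nD (take (Suc j) psi) = v j + (if psi ! j = D then 1 else 0)"
      using nD_take_Suc[of j psi] nD_psi[of j] j by simp
    also have "\<dots> = Suc col" using v_at[OF m] rc r pj by (auto simp: stp_def)
    finally show ?thesis using st r rc by (simp add: lab_def)
  qed
qed

lemma FF_psi: "FF psi = F"
proof
  fix x
  show "FF psi x = F x"
  proof
    show "FF psi x \<subseteq> F x"
      using lab_psi cellOf_in by (auto simp: FF_def)
  next
    show "F x \<subseteq> FF psi x"
    proof
      fix a assume a: "a \<in> F x"
      then have ar: "a \<in> {1..N}" using F_sub by blast
      then have "a = Suc (a - 1)" "a - 1 < N" by auto
      moreover have "lab psi (a - 1) = x" using lab_psi[of "a-1"] \<open>a - 1 < N\<close> \<open>a = Suc (a - 1)\<close> cellOf_eq[OF a] by simp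
      ultimately show "a \<in> FF psi x" unfolding FF_def by (metis (mono_tags, lifting) mem_Collect_eq psi_len)
    qed
  qed
qed

lemma v_le_u: "v t \<le> u t"
proof -
  have "{y. y < c \<and> mn (1, y) \<le> t} \<subseteq> {y. y < b \<and> mn (0, y) \<le> t}"
  proof
    fix y assume y: "y \<in> {y. y < c \<and> mn (1, y) \<le> t}"
    then have "mn (0, y) < mn (1, y)"
      using F_ord[of "(0,y)" "(1,y)" "mn (0,y)" "mn (1,y)"] mn_in[of "(0,y)"] mn_in[of "(1,y)"] C0 C1 cb
      by simp
    then show "y \<in> {y. y < b \<and> mn (0, y) \<le> t}" using y cb by auto
  qed
  then show ?thesis unfolding u_def v_def by (rule card_mono[rotated]) simp
qed

lemma u_N: "u N = b"
proof -
  have "{y. y < b \<and> mn (0, y) \<le> N} = {y. y < b}" using mn_range C0 by auto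
  then show ?thesis by (simp add: u_def)
qed

lemma v_N: "v N = c"
proof -
  have "{y. y < c \<and> mn (1, y) \<le> N} = {y. y < c}" using mn_range C1 by auto
  then show ?thesis by (simp add: v_def)
qed

lemma nU_psi_all: "nU psi = b" using nU_psi[of N] u_N by simp
lemma nD_psi_all: "nD psi = c" using nD_psi[of N] v_N by simp

lemma psi_bl: "ballotlike psi"
  unfolding ballotlike_def
proof (intro conjI allI impI)
  fix t assume "t \<le> length psi"
  then show "0 \<le> ht (take t psi)" using nU_psi nD_psi v_le_u by (simp add: ht_nUD)
next
  fix j assume j: "j < length psi" and H: "psi ! j = Hu"
  then have jN: "j < N" by simp
  have m: "Suc j \<in> {1..N}" using jN by simp
  obtain r col where rc: "cellOf (Suc j) = (r, col)" by fastforce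
  have st: "stp (Suc j) = Hu" using H psi_nth[OF jN] by simp
  then have r: "r = 0" and nm: "Suc j \<noteq> mn (0, col)" using rc by (auto simp: stp_def split: if_splits)
  have uj: "u j = Suc col" using u_at[OF m] rc r nm by simp
  have mF: "Suc j \<in> F (0, col)" using cellOf_in[OF m] rc r by simp
  have colb: "col < b" using cellOf_C[OF m] rc r C0 by simp
  have "{y. y < c \<and> mn (1, y) \<le> j} \<subseteq> {..<col}"
  proof
    fix y assume y: "y \<in> {y. y < c \<and> mn (1, y) \<le> j}"
    show "y \<in> {..<col}"
    proof (rule ccontr)
      assume "y \<notin> {..<col}"
      then have "col \<le> y" by simp
      then have "Suc j < mn (1, y)"
        using F_ord[of "(0,col)" "(1,y)" "Suc j" "mn (1,y)"] mF mn_in[of "(1,y)"] C1 y by simp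
      then show False using y by simp
    qed
  qed
  then have "v j \<le> col" unfolding v_def using card_mono[of "{..<col}"] by fastforce
  then show "ht (take j psi) \<noteq> 0" using nU_psi[of j] nD_psi[of j] jN uj by (simp add: ht_nUD)
next
  fix j assume j: "j < length psi" and H: "psi ! j = Hd"
  then have jN: "j < N" by simp
  have m: "Suc j \<in> {1..N}" using jN by simp
  obtain r col where rc: "cellOf (Suc j) = (r, col)" by fastforce
  have st: "stp (Suc j) = Hd" using H psi_nth[OF jN] by simp
  then have r: "r \<noteq> 0" and nm: "Suc j \<noteq> mn (r, col)" using rc by (auto simp: stp_def split: if_splits)
  have mF: "Suc j \<in> F (r, col)" using cellOf_in[OF m] rc by simp
  have xc: "(r, col) \<in> cells (twoRow b c)" using cellOf_C[OF m] rc by simp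
  define m0 where "m0 = mn (r, col)"
  have m0F: "m0 \<in> F (r, col)" using mn_in[OF xc] m0_def by simp
  have m0r: "m0 \<in> {1..N}" using mn_range[OF xc] m0_def by simp
  have "m0 \<le> Suc j" using mn_le[OF mF] m0_def by simp
  then have lt: "m0 - 1 < j" using nm m0_def m0r by auto
  have "cellOf m0 = (r, col)" using cellOf_eq[OF m0F] .
  then have "stp m0 = D" using r m0_def by (simp add: stp_def)
  moreover have "m0 - 1 < N" "Suc (m0 - 1) = m0" using m0r by auto
  ultimately have "psi ! (m0 - 1) = D" using psi_nth[of "m0 - 1"] by simp
  then have "take j psi ! (m0 - 1) = D" using lt by simp
  moreover have "m0 - 1 < length (take j psi)" using lt jN by simp
  ultimately show "D \<in> set (take j psi)" by (metis nth_mem)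
qed

end



lemma U_in_iff: "U \<in> set xs \<longleftrightarrow> 0 < nU xs"
  by (induction xs) auto

lemma Fm_eq: assumes "n \<ge> 2" "i \<le> n"
  shows "Fm n i = ibinom (2*n-2) (int n - int i - 1) - ibinom (2*n-2) (int n - int i - 2)
           + ibinom (n-2) (int n - int i)"
proof -
  have "ibinom (n-2) (int i - 2) = ibinom (n-2) (int n - int i)"
  proof (cases "i < 2")
    case True
    then have "n - 2 < n - i" using assms by linarith
    then show ?thesis using True assms by (simp add: ibinom_def nat_diff_distrib binomial_eq_0)
  next
    case False
    then have e1: "nat (int i - 2) = i - 2" "nat (int n - int i) = (n - 2) - (i - 2)" using assms by auto
    have "i - 2 \<le> n - 2" using assms by simp
    then show ?thesis using False assms by (simp add: ibinom_def e1 binomial_symmetric)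
  qed
  then show ?thesis by (simp add: Fm_def)
qed

theorem theorem13:
  fixes n i :: nat
  assumes "n \<ge> 2" and "i \<le> n"
  shows "int (card (Bal n i)) =
           ibinom (2*n-2) (int n - int i - 1) - ibinom (2*n-2) (int n - int i - 2)
           + ibinom (n-2) (int n - int i)
       \<and> int (card (SIGMA bk : {(b, k). max i 1 \<le> b \<and> 2*b - i + k = n}.
                      SYTplus (snd bk) (twoRow (fst bk) (fst bk - i)))) =
           ibinom (2*n-2) (int n - int i - 1) - ibinom (2*n-2) (int n - int i - 2)
           + ibinom (n-2) (int n - int i)"
proof -
  have B: "int (card (Bal n i)) =
           ibinom (2*n-2) (int n - int i - 1) - ibinom (2*n-2) (int n - int i - 2)
           + ibinom (n-2) (int n - int i)"
    using Bal_formula[OF assms(1)] Fm_eq[OF assms] by simp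
  let ?T = "SIGMA bk : {(b, k). max i 1 \<le> b \<and> 2*b - i + k = n}.
                      SYTplus (snd bk) (twoRow (fst bk) (fst bk - i))"
  define \<Phi> where "\<Phi> p = ((nU p, n - nU p - nD p), FF p)" for p
  have bij: "bij_betw \<Phi> (Bal n i) ?T"
    unfolding bij_betw_def
  proof (intro conjI)
    show "inj_on \<Phi> (Bal n i)"
    proof (rule inj_onI)
      fix p q assume p: "p \<in> Bal n i" and q: "q \<in> Bal n i" and e: "\<Phi> p = \<Phi> q"
      then show "p = q" using FF_inj[of p q] unfolding \<Phi>_def Bal_def by auto
    qed
  next
    show "\<Phi> ` Bal n i = ?T"
    proof
      show "\<Phi> ` Bal n i \<subseteq> ?T"
      proof
        fix z assume "z \<in> \<Phi> ` Bal n i"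
        then obtain p where p: "p \<in> Bal n i" and z: "z = \<Phi> p" by blast
        have bl: "ballotlike p" and len: "length p = n" and h: "ht p = int i" using p by (auto simp: Bal_def)
        have hd: "int (nU p) - int (nD p) = int i" using h by (simp add: ht_nUD)
        then have nD: "nD p = nU p - i" and iU: "i \<le> nU p" by auto
        have "p ! 0 = U" using bl_first[OF bl] len assms(1) by simp
        then have "U \<in> set p" using len assms(1) by (metis gr0I nth_mem not_numeral_le_zero)
        then have U1: "1 \<le> nU p" by (simp add: U_in_iff)
        have nl: "nU p + nD p \<le> n" using nUD_len[of p] len by simp
        have idx: "max i 1 \<le> nU p \<and> 2 * nU p - i + (n - nU p - nD p) = n"
          using iU U1 nl nD by auto
        have "FF p \<in> SYTplus (n - nU p - nD p) (twoRow (nU p) (nU p - i))"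
          using FF_SYT[OF bl] len nD by simp
        then show "z \<in> ?T" using idx z unfolding \<Phi>_def by auto
      qed
    next
      show "?T \<subseteq> \<Phi> ` Bal n i"
      proof
        fix z assume z: "z \<in> ?T"
        then obtain b k F where zz: "z = ((b, k), F)" and idx: "max i 1 \<le> b" "2*b - i + k = n"
          and F: "F \<in> SYTplus k (twoRow b (b - i))" by auto
        interpret S: sytl F k b "b - i" by unfold_locales (use F in auto)
        have N: "S.N = n" using idx unfolding S.N_def by simp
        have "S.psi \<in> Bal n i"
          unfolding Bal_def using S.psi_bl N S.nU_psi_all S.nD_psi_all idx by (simp add: ht_nUD)
        moreover have kk: "n - b - (b - i) = k" using idx by arith
        moreover have "\<Phi> S.psi = z"
          using kk unfolding \<Phi>_def zz using S.nU_psi_all S.nD_psi_all S.FF_psi idx by simp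
        ultimately show "z \<in> \<Phi> ` Bal n i" by blast
      qed
    qed
  qed
  have "card (Bal n i) = card ?T" by (rule bij_betw_same_card[OF bij])
  then show ?thesis using B by simp
qed


end
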